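(* Let $R$ satisfy the assumptions in the context and fix $j\in\llbracket 1,m_x\rrbracket$. Suppose $N^*_{j-\frac12,k-\frac12}\ge 0$ for all $k\in\llbracket1,m_y\rrbracket$, and set $U^*_{j-\frac12,k-\frac12}=\varepsilon\ln N^*_{j-\frac12,k-\frac12}$ (with the convention $\exp(U^*/\varepsilon)=0$ when $N^*=0$). Then: (i) the equation $$\rho=\Delta y\sum_{k=1}^{m_y}\exp\Big(\frac{U^*_{j-\frac12,k-\frac12}+\Delta t\,R(y_{k-\frac12},\rho)}{\varepsilon}\Big)$$ has a unique solution $\rho=\rho^{h+1}_{j-\frac12}\in[0,\infty)$; consequently the scheme $U^{h+1}_{j-\frac12,k-\frac12}=U^*_{j-\frac12,k-\frac12}+\Delta t\,R(y_{k-\frac12},\rho^{h+1}_{j-\frac12})$, $N^{h+1}_{j-\frac12,k-\frac12}=\exp(U^{h+1}_{j-\frac12,k-\frac12}/\varepsilon)$, admits a unique solution, and it satisfies $N^{h+1}_{j-\frac12,k-\frac12}\ge 0$ for all $k$ and $\rho^{h+1}_{j-\frac12}=\Delta y\sum_{k}N^{h+1}_{j-\frac12,k-\frac12}$; (ii) if moreover $0\le \rho^*_{j-\frac12}:=\Delta y\sum_{k=1}^{m_y}N^*_{j-\frac12,k-\frac12}\le\rho_M$, then $0\le\rho^{h+1}_{j-\frac12}\le\rho_M$.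
   Context: Fix $Y>0$, integers $m_x,m_y\ge1$, $\Delta y=Y/m_y$, $y_{k-\frac12}=(k-\frac12)\Delta y$, $\Delta t>0$, $\varepsilon>0$, and $\rho_M\in(0,\infty)$. The function $R:[0,Y]\times[0,\infty)\to\mathbb{R}$ is smooth and bounded and satisfies $R(Y,0)=0$, $R(0,\rho_M)=0$, $\partial_\rho R(y,\rho)<0$ for all $(y,\rho)$, and $\partial_y R(y,\rho)<0$ for $y\in(0,Y]$. The scheme above is the implicit time discretisation of the reaction step $\partial_t u=R(y,\rho)$, $\rho=\int_0^Y e^{u/\varepsilon}dy$, with $n=e^{u/\varepsilon}$. *)

theory Defs
  imports "HOL-Analysis.Analysis"
begin

text \<open>Smoothness (C-infinity) of a real function of two real variables on a set S:
  f belongs to a family of functions, each continuous on S and (Frechet) differentiable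
  within S with both partial derivatives again in the family.\<close>
definition smooth2_on :: "(real \<times> real) set \<Rightarrow> (real \<times> real \<Rightarrow> real) \<Rightarrow> bool" where
  "smooth2_on S f \<longleftrightarrow>
     (\<exists>F. f \<in> F \<and>
        (\<forall>g\<in>F. continuous_on S g \<and>
           (\<exists>gy gr. gy \<in> F \<and> gr \<in> F \<and>
              (\<forall>p\<in>S. (g has_derivative (\<lambda>(a, b). gy p * a + gr p * b)) (at p within S)))))"

text \<open>exp((U + r)/eps) with U = eps * ln n, using the convention exp(U/eps) = 0 when n = 0.\<close>
definition expU :: "real \<Rightarrow> real \<Rightarrow> real \<Rightarrow> real" where
  "expU eps n r = (if n = 0 then 0 else exp ((eps * ln n + r) / eps))"

end

theory Submission
  imports Defs
begin


lemma expU_eq: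
  assumes "eps > 0" "n \<ge> 0"
  shows "expU eps n r = n * exp (r / eps)"
proof (cases "n = 0")
  case True thus ?thesis by (simp add: expU_def)
next
  case False
  hence n: "n > 0" using assms by simp
  have "(eps * ln n + r) / eps = ln n + r / eps" using assms by (simp add: field_simps)
  thus ?thesis using n False by (simp add: expU_def exp_add)
qed

theorem propositionA2:
  fixes Y dy dt eps rhoM :: real and mx my j :: nat
    and R :: "real \<Rightarrow> real \<Rightarrow> real"
    and Nstar :: "nat \<Rightarrow> nat \<Rightarrow> real"
  assumes Y: "Y > 0" and mx: "mx \<ge> 1" and my: "my \<ge> 1"
    and dy: "dy = Y / real my"
    and dt: "dt > 0" and eps: "eps > 0" and rhoM: "rhoM > 0"
    and R_smooth: "smooth2_on ({0..Y} \<times> {0..}) (\<lambda>(y, r). R y r)"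
    and R_bdd: "\<exists>B. \<forall>y\<in>{0..Y}. \<forall>r\<ge>0. \<bar>R y r\<bar> \<le> B"
    and R_Y0: "R Y 0 = 0" and R_0M: "R 0 rhoM = 0"
    and R_drho: "\<forall>y\<in>{0..Y}. \<forall>r\<ge>0. \<exists>d.
                   ((\<lambda>s. R y s) has_real_derivative d) (at r within {0..}) \<and> d < 0"
    and R_dy: "\<forall>y\<in>{0<..Y}. \<forall>r\<ge>0. \<exists>d.
                   ((\<lambda>z. R z r) has_real_derivative d) (at y within {0..Y}) \<and> d < 0"
    and j: "1 \<le> j" "j \<le> mx"
    and Nstar_nn: "\<forall>k\<in>{1..my}. Nstar j k \<ge> 0"
  shows "(\<exists>!rho. rho \<ge> 0 \<and>
            rho = dy * (\<Sum>k=1..my. expU eps (Nstar j k) (dt * R ((real k - 1/2) * dy) rho)))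
       \<and> (\<forall>rho. rho \<ge> 0 \<and>
            rho = dy * (\<Sum>k=1..my. expU eps (Nstar j k) (dt * R ((real k - 1/2) * dy) rho))
          \<longrightarrow> (\<forall>k\<in>{1..my}. expU eps (Nstar j k) (dt * R ((real k - 1/2) * dy) rho) \<ge> 0)
            \<and> (0 \<le> dy * (\<Sum>k=1..my. Nstar j k) \<and> dy * (\<Sum>k=1..my. Nstar j k) \<le> rhoM
                 \<longrightarrow> 0 \<le> rho \<and> rho \<le> rhoM))"
proof -
  obtain F where FF: "(\<lambda>(y, r). R y r) \<in> F" and FC: "\<forall>g\<in>F. continuous_on ({0..Y} \<times> {0..}) g"
    using R_smooth unfolding smooth2_on_def by blast
  have cont2: "continuous_on ({0..Y} \<times> {0..}) (\<lambda>(y, r). R y r)" using FF FC by blast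
  have contr: "continuous_on {0..} (R y)" if "y \<in> {0..Y}" for y
  proof -
    have "continuous_on {0..} (\<lambda>s. (\<lambda>(y, r). R y r) (y, s))"
      by (rule continuous_on_compose2[OF cont2]) (use that in \<open>auto intro!: continuous_intros\<close>)
    thus ?thesis by simp
  qed
  have conty: "continuous_on {0..Y} (\<lambda>z. R z r)" if "r \<ge> 0" for r
  proof -
    have "continuous_on {0..Y} (\<lambda>z. (\<lambda>(y, r). R y r) (z, r))"
      by (rule continuous_on_compose2[OF cont2]) (use that in \<open>auto intro!: continuous_intros\<close>)
    thus ?thesis by simp
  qed
  have decr: "R y b < R y a" if y: "y \<in> {0..Y}" and ab: "0 \<le> a" "a < b" for y a b
  proof (rule DERIV_neg_imp_decreasing_open[OF ab(2)])
    fix x assume x: "a < x" "x < b"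
    obtain d where d: "((\<lambda>s. R y s) has_real_derivative d) (at x within {0..})" "d < 0"
    proof -
      have "x \<ge> 0" using x ab by simp
      thus ?thesis using R_drho y that by blast
    qed
    have "at x within {0..} = at x" using x ab by (intro at_within_interior) auto
    thus "\<exists>d. (R y has_real_derivative d) (at x) \<and> d < 0" using d by auto
  next
    show "continuous_on {a..b} (R y)"
      using ab by (intro continuous_on_subset[OF contr[OF y]]) auto
  qed
  have dypos: "dy > 0" using Y my dy by simp
  define yk where "yk k = (real k - 1/2) * dy" for k :: nat
  have yk_in: "0 < yk k \<and> yk k < Y" if "k \<in> {1..my}" for k
  proof -
    have "real k \<le> real my" "real k \<ge> 1" using that by auto
    hence "(real k - 1/2) * dy < real my * dy" "0 < (real k - 1/2) * dy" using dypos
      by (auto intro!: mult_strict_right_mono)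
    moreover have "real my * dy = Y" using dy my by simp
    ultimately show ?thesis unfolding yk_def by simp
  qed
  have RM: "R (yk k) rhoM \<le> 0" if k: "k \<in> {1..my}" for k
  proof -
    have "R 0 rhoM > R (yk k) rhoM"
    proof (rule DERIV_neg_imp_decreasing_open[of 0 "yk k" "\<lambda>z. R z rhoM"])
      show "0 < yk k" using yk_in[OF k] by simp
    next
      fix x assume x: "0 < x" "x < yk k"
      hence xY: "x \<in> {0<..Y}" using yk_in[OF k] by auto
      then obtain d where d: "((\<lambda>z. R z rhoM) has_real_derivative d) (at x within {0..Y})" "d < 0"
        using R_dy rhoM xY by (meson less_imp_le)
      have "at x within {0..Y} = at x" using x yk_in[OF k] by (intro at_within_interior) auto
      thus "\<exists>d. ((\<lambda>z. R z rhoM) has_real_derivative d) (at x) \<and> d < 0" using d by auto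
    next
      show "continuous_on {0..yk k} (\<lambda>z. R z rhoM)"
        using rhoM yk_in[OF k] by (intro continuous_on_subset[OF conty[of rhoM]]) auto
    qed
    thus ?thesis using R_0M by simp
  qed
  define N where "N k = Nstar j k" for k
  have Nnn: "N k \<ge> 0" if "k \<in> {1..my}" for k using Nstar_nn that N_def by auto
  define G where "G rho = dy * (\<Sum>k=1..my. N k * exp (dt * R (yk k) rho / eps))" for rho
  have eqG: "dy * (\<Sum>k=1..my. expU eps (Nstar j k) (dt * R ((real k - 1/2) * dy) rho)) = G rho" for rho
    unfolding G_def yk_def N_def using Nstar_nn eps
    by (auto intro!: sum.cong arg_cong[where f="\<lambda>x. dy * x"] simp: expU_eq)
  have Gnn: "G rho \<ge> 0" for rho unfolding G_def using dypos Nnn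
    by (auto intro!: sum_nonneg mult_nonneg_nonneg)
  have Gmono: "G b \<le> G a" if "0 \<le> a" "a < b" for a b
  proof -
    have "\<And>k. k \<in> {1..my} \<Longrightarrow> N k * exp (dt * R (yk k) b / eps) \<le> N k * exp (dt * R (yk k) a / eps)"
    proof -
      fix k assume k: "k \<in> {1..my}"
      have "R (yk k) b < R (yk k) a" using decr[of "yk k" a b] yk_in[OF k] that by auto
      hence "dt * R (yk k) b / eps \<le> dt * R (yk k) a / eps" using dt eps
        by (simp add: divide_right_mono)
      thus "N k * exp (dt * R (yk k) b / eps) \<le> N k * exp (dt * R (yk k) a / eps)"
        using Nnn[OF k] by (simp add: mult_left_mono)
    qed
    thus ?thesis unfolding G_def using dypos by (intro mult_left_mono[OF sum_mono]) auto
  qed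
  have Gcont: "continuous_on {0..} G"
  proof -
    have "\<And>k. k \<in> {1..my} \<Longrightarrow> continuous_on {0..} (\<lambda>rho. N k * exp (dt * R (yk k) rho / eps))"
    proof -
      fix k assume k: "k \<in> {1..my}"
      have "yk k \<in> {0..Y}" using yk_in[OF k] by auto
      from contr[OF this] have c: "continuous_on {0..} (R (yk k))" .
      show "continuous_on {0..} (\<lambda>rho. N k * exp (dt * R (yk k) rho / eps))"
        using eps by (intro continuous_intros continuous_on_compose2[OF c]) auto
    qed
    hence "continuous_on {0..} (\<lambda>rho. \<Sum>k=1..my. N k * exp (dt * R (yk k) rho / eps))"
      by (intro continuous_on_sum) auto
    thus ?thesis unfolding G_def by (intro continuous_on_mult_left)
  qed
  obtain B where B: "\<forall>y\<in>{0..Y}. \<forall>r\<ge>0. \<bar>R y r\<bar> \<le> B" using R_bdd by blast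
  define M where "M = dy * (\<Sum>k=1..my. N k * exp (dt * B / eps))"
  have GM: "G rho \<le> M" if "rho \<ge> 0" for rho
  proof -
    have "\<And>k. k \<in> {1..my} \<Longrightarrow> N k * exp (dt * R (yk k) rho / eps) \<le> N k * exp (dt * B / eps)"
    proof -
      fix k assume k: "k \<in> {1..my}"
      have "yk k \<in> {0..Y}" using yk_in[OF k] by auto
      hence "\<bar>R (yk k) rho\<bar> \<le> B" using B that by blast
      hence "R (yk k) rho \<le> B" by simp
      hence "dt * R (yk k) rho / eps \<le> dt * B / eps" using dt eps
        by (simp add: divide_right_mono)
      thus "N k * exp (dt * R (yk k) rho / eps) \<le> N k * exp (dt * B / eps)"
        using Nnn[OF k] by (simp add: mult_left_mono)
    qed
    thus ?thesis unfolding G_def M_def using dypos by (intro mult_left_mono[OF sum_mono]) auto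
  qed
  have M0: "M \<ge> 0" using GM[of 0] Gnn[of 0] by simp
  have ex: "\<exists>rho. rho \<ge> 0 \<and> rho = G rho"
  proof -
    have c: "continuous_on {0..M} (\<lambda>r. r - G r)"
      using Gcont by (auto intro!: continuous_intros elim: continuous_on_subset)
    have "(\<lambda>r. r - G r) 0 \<le> 0" "0 \<le> (\<lambda>r. r - G r) M" using Gnn[of 0] GM[OF M0] by auto
    from IVT'[OF this M0 c] show ?thesis by auto
  qed
  have uniq: "a = b" if "a \<ge> 0" "a = G a" "b \<ge> 0" "b = G b" for a b
  proof (rule ccontr)
    assume "a \<noteq> b"
    hence "a < b \<or> b < a" by auto
    thus False using Gmono[of a b] Gmono[of b a] that by auto
  qed
  have part2: "rho \<le> rhoM" if "rho \<ge> 0" "rho = G rho" "dy * (\<Sum>k=1..my. N k) \<le> rhoM" for rho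
  proof (rule ccontr)
    assume "\<not> rho \<le> rhoM"
    hence gt: "rhoM < rho" by simp
    have "\<And>k. k \<in> {1..my} \<Longrightarrow> N k * exp (dt * R (yk k) rho / eps) \<le> N k"
    proof -
      fix k assume k: "k \<in> {1..my}"
      have "R (yk k) rho < R (yk k) rhoM" using decr[of "yk k" rhoM rho] yk_in[OF k] gt rhoM by auto
      hence "R (yk k) rho \<le> 0" using RM[OF k] by simp
      hence "dt * R (yk k) rho / eps \<le> 0" using dt eps
        by (simp add: divide_nonpos_pos mult_nonneg_nonpos)
      hence "exp (dt * R (yk k) rho / eps) \<le> 1" by simp
      thus "N k * exp (dt * R (yk k) rho / eps) \<le> N k"
        using Nnn[OF k] mult_left_mono[of _ 1 "N k"] by simp
    qed
    hence "G rho \<le> dy * (\<Sum>k=1..my. N k)" unfolding G_def using dypos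
      by (intro mult_left_mono[OF sum_mono]) auto
    thus False using that gt by simp
  qed
  show ?thesis
    unfolding eqG
  proof (intro conjI allI impI)
    show "\<exists>!rho. rho \<ge> 0 \<and> rho = G rho" using ex uniq by blast
  next
    fix rho assume "0 \<le> rho \<and> rho = G rho"
    show "\<forall>k\<in>{1..my}. expU eps (Nstar j k) (dt * R ((real k - 1/2) * dy) rho) \<ge> 0"
      using Nstar_nn eps by (auto simp: expU_eq)
  next
    fix rho assume "0 \<le> rho \<and> rho = G rho"
      "0 \<le> dy * (\<Sum>k=1..my. Nstar j k) \<and> dy * (\<Sum>k=1..my. Nstar j k) \<le> rhoM"
    thus "0 \<le> rho" "rho \<le> rhoM" using part2[of rho] unfolding N_def by auto
  qed
qed

end
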